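(* Let $A\subseteq\mathbb{N}$ be infinite and coinfinite and let $Q=\{A\}$, a quantifier of type $\langle 1\rangle$ (note $Q=Q_A\cap Q^A$). Then $\mathrm{Aut}(Q)=\{g\in S_\infty: g(A)=A\}$, and every subset of $\mathbb{N}$ defined by an $\mathscr{L}_{\omega_1\omega}(Q)$-formula $\varphi(x,c_0,\dots,c_{t})$ with parameters $c_i\in\{0,\dots,t\}$ is either a subset of $\{0,\dots,t\}$ or contains $\mathbb{N}\setminus\{0,\dots,t\}$. In particular the orbits of $\mathrm{Aut}(Q)$ (e.g. the set $A$, which is the orbit of any element of $A$) are not all definable in $\mathscr{L}_{\omega_1\omega}(Q)$.
   Context: A quantifier of type $\langle k\rangle$ on $\mathbb{N}$ is a family of subsets of $\mathbb{N}^k$. For $A\subseteq\mathbb{N}^k$, $Q_A=\{X\subseteq\mathbb{N}^k:A\subseteq X\}$ and $Q^A=\{X\subseteq\mathbb{N}^k:X\subseteq A\}$. A permutation $f$ of $\mathbb{N}$ fixes $Q$ if $B\in Q\iff f(B)\in Q$ for all $B$; $\mathrm{Aut}(Q)$ is the group of such permutations. $\mathscr{L}_{\omega_1\omega}(Q)$ extends $\mathscr{L}_{\omega_1\omega}$ (countable conjunctions/disjunctions, finite quantifier strings) by formulas $Qx\,\varphi(x,y)$ with $\mathbb{N}\models Qx\,\varphi(x,b)$ iff $\{a:\mathbb{N}\models\varphi(a,b)\}\in Q$; formulas have no non-logical symbols besides $Q$. A set $B\subseteq\mathbb{N}^n$ is definable in $\mathscr{L}_{\omega_1\omega}(Q)$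 if there is a parameter-free formula $\varphi(x_1,\ldots,x_n)$ with $b\in B\iff\mathbb{N}\models\varphi(b)$. *)

theory Defs
  imports Main
begin

text \<open>Formulas of the infinitary logic L_{omega_1 omega}(Q) for a quantifier Q of type <1>
  on the natural numbers.
  Countable conjunctions are indexed by nat (finite conjunctions by repetition);
  disjunction and universal quantification are definable via negation.\<close>

datatype form =
    Eq nat nat
  | Neg form
  | Conj "nat \<Rightarrow> form"
  | Ex nat form
  | Qf nat form

primrec sat :: "nat set set \<Rightarrow> form \<Rightarrow> (nat \<Rightarrow> nat) \<Rightarrow> bool" where
  "sat Q (Eq i j) s = (s i = s j)"
| "sat Q (Neg \<phi>) s = (\<not> sat Q \<phi> s)"
| "sat Q (Conj F) s = (\<forall>n. sat Q (F n) s)"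
| "sat Q (Ex v \<phi>) s = (\<exists>a. sat Q \<phi> (s(v := a)))"
| "sat Q (Qf v \<phi>) s = ({a. sat Q \<phi> (s(v := a))} \<in> Q)"

primrec fv :: "form \<Rightarrow> nat set" where
  "fv (Eq i j) = {i, j}"
| "fv (Neg \<phi>) = fv \<phi>"
| "fv (Conj F) = (\<Union>n. fv (F n))"
| "fv (Ex v \<phi>) = fv \<phi> - {v}"
| "fv (Qf v \<phi>) = fv \<phi> - {v}"

text \<open>Well-formed L_{omega_1 omega} formulas have finitely many free variables
  (imposed on every subformula).\<close>
primrec wf :: "form \<Rightarrow> bool" where
  "wf (Eq i j) = True"
| "wf (Neg \<phi>) = wf \<phi>"
| "wf (Conj F) = ((\<forall>n. wf (F n)) \<and> finite (\<Union>n. fv (F n)))"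
| "wf (Ex v \<phi>) = wf \<phi>"
| "wf (Qf v \<phi>) = wf \<phi>"

definition Aut :: "nat set set \<Rightarrow> (nat \<Rightarrow> nat) set" where
  "Aut Q = {f. bij f \<and> (\<forall>B. B \<in> Q \<longleftrightarrow> f ` B \<in> Q)}"

definition definable1 :: "nat set set \<Rightarrow> nat set \<Rightarrow> bool" where
  "definable1 Q B \<longleftrightarrow> (\<exists>\<phi> x. wf \<phi> \<and> fv \<phi> \<subseteq> {x} \<and>
      (\<forall>s a. a \<in> B \<longleftrightarrow> sat Q \<phi> (s(x := a))))"

end

theory Submission
  imports Defs
begin

lemma wf_finite_fv: "wf \<phi> \<Longrightarrow> finite (fv \<phi>)"
  by (induction \<phi>) auto

lemma sat_agree: "(\<forall>i\<in>fv \<phi>. s i = s' i) \<Longrightarrow> sat Q \<phi> s = sat Q \<phi> s'"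
proof (induction \<phi> arbitrary: s s')
  case (Eq i j)
  then show ?case by simp
next
  case (Neg \<phi>)
  then show ?case by simp
next
  case (Conj F)
  have "\<And>n. sat Q (F n) s = sat Q (F n) s'"
  proof -
    fix n
    have "\<forall>i\<in>fv (F n). s i = s' i" using Conj.prems by auto
    then show "sat Q (F n) s = sat Q (F n) s'" using Conj.IH[OF rangeI] by blast
  qed
  then show ?case by simp
next
  case (Ex v \<phi>)
  have "\<And>a. sat Q \<phi> (s(v := a)) = sat Q \<phi> (s'(v := a))"
    by (rule Ex.IH) (use Ex.prems in auto)
  then show ?case by simp
next
  case (Qf v \<phi>)
  have "\<And>a. sat Q \<phi> (s(v := a)) = sat Q \<phi> (s'(v := a))"
    by (rule Qf.IH) (use Qf.prems in auto)
  then show ?case by simp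
qed

lemma sat_perm: "bij \<pi> \<Longrightarrow> sat {} \<phi> (\<pi> \<circ> s) = sat {} \<phi> s"
proof (induction \<phi> arbitrary: s)
  case (Ex v \<phi>)
  have e: "\<And>b. (\<pi> \<circ> s)(v := \<pi> b) = \<pi> \<circ> (s(v := b))" by auto
  show ?case
  proof
    assume "sat {} (Ex v \<phi>) (\<pi> \<circ> s)"
    then obtain a where "sat {} \<phi> ((\<pi> \<circ> s)(v := a))" by auto
    moreover have "a = \<pi> (inv \<pi> a)" using Ex.prems by (simp add: surj_f_inv_f bij_is_surj)
    ultimately have "sat {} \<phi> (\<pi> \<circ> (s(v := inv \<pi> a)))" using e by metis
    then have "sat {} \<phi> (s(v := inv \<pi> a))" using Ex.IH Ex.prems by blast
    then show "sat {} (Ex v \<phi>) s" by auto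
  next
    assume "sat {} (Ex v \<phi>) s"
    then obtain b where "sat {} \<phi> (s(v := b))" by auto
    then have "sat {} \<phi> (\<pi> \<circ> (s(v := b)))" using Ex.IH Ex.prems by blast
    then show "sat {} (Ex v \<phi>) (\<pi> \<circ> s)" using e by (metis sat.simps(4))
  qed
next
  case (Conj F)
  have "\<And>n. sat {} (F n) (\<pi> \<circ> s) = sat {} (F n) s"
    using Conj.IH[OF rangeI] Conj.prems by blast
  then show ?case by (simp add: comp_def)
next
  case (Eq i j)
  then show ?case by (simp add: bij_is_inj inj_eq)
qed simp_all

definition swp :: "nat \<Rightarrow> nat \<Rightarrow> nat \<Rightarrow> nat" where
  "swp a b = (\<lambda>z. if z = a then b else if z = b then a else z)"

lemma swp_surj: "bij (swp a b)"
proof -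
  have "\<And>z. swp a b (swp a b z) = z" by (simp add: swp_def)
  then show ?thesis by (metis o_bij comp_apply id_apply ext)
qed

lemma sat_swap:
  assumes "a \<notin> s ` (fv \<phi> - {x})" "b \<notin> s ` (fv \<phi> - {x})"
  shows "sat {} \<phi> (s(x := a)) = sat {} \<phi> (s(x := b))"
proof -
  have "sat {} \<phi> (s(x := a)) = sat {} \<phi> (swp a b \<circ> (s(x := a)))"
    using sat_perm[OF swp_surj] by metis
  also have "\<dots> = sat {} \<phi> (s(x := b))"
    apply (rule sat_agree)
    using assms by (auto simp: swp_def)
  finally show ?thesis .
qed

lemma not_A:
  assumes "infinite A" "infinite (- A)" "finite G"
    and inv: "\<And>a b. a \<notin> G \<Longrightarrow> b \<notin> G \<Longrightarrow> (a \<in> S \<longleftrightarrow> b \<in> S)"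
  shows "S \<noteq> A"
proof
  assume SA: "S = A"
  show False
  proof (cases "\<exists>a. a \<notin> G \<and> a \<in> S")
    case True
    then have "- S \<subseteq> G" using inv by blast
    then show ?thesis using SA assms finite_subset by blast
  next
    case False
    then have "S \<subseteq> G" by blast
    then show ?thesis using SA assms finite_subset by blast
  qed
qed

lemma sat_A_empty:
  assumes "infinite A" "infinite (- A)"
  shows "wf \<phi> \<Longrightarrow> sat {A} \<phi> s = sat {} \<phi> s"
proof (induction \<phi> arbitrary: s)
  case (Conj F)
  have "\<And>n. sat {A} (F n) s = sat {} (F n) s"
    using Conj.IH[OF rangeI] Conj.prems by simp
  then show ?case by simp
next
  case (Ex v \<phi>)
  then show ?case by simp
next
  case (Qf v \<phi>)
  let ?S = "{a. sat {} \<phi> (s(v := a))}"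
  have eq: "{a. sat {A} \<phi> (s(v := a))} = ?S" using Qf by auto
  have fin: "finite (s ` (fv \<phi> - {v}))" using Qf.prems wf_finite_fv by auto
  have "?S \<noteq> A"
    apply (rule not_A[OF assms fin])
    using sat_swap by blast
  then show ?case using eq by simp
qed simp_all

theorem mainTheorem11:
  fixes A :: "nat set"
  assumes "infinite A" and "infinite (- A)"
  shows "Aut {A} = {g. bij g \<and> g ` A = A}
     \<and> (\<forall>\<phi> x (v :: nat \<Rightarrow> nat) (t :: nat) (s :: nat \<Rightarrow> nat).
           wf \<phi> \<and> fv \<phi> \<subseteq> insert x (v ` {0..t}) \<and> x \<notin> v ` {0..t}
           \<and> (\<forall>i\<le>t. s (v i) \<le> t)
           \<longrightarrow> {a. sat {A} \<phi> (s(x := a))} \<subseteq> {0..t}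
             \<or> - {0..t} \<subseteq> {a. sat {A} \<phi> (s(x := a))})
     \<and> (\<forall>a\<in>A. {g a | g. g \<in> Aut {A}} = A)
     \<and> \<not> definable1 {A} A"
proof -
  have P1: "Aut {A} = {g. bij g \<and> g ` A = A}"
  proof -
    have "\<And>g B. bij g \<Longrightarrow> g ` A = A \<Longrightarrow> (g ` B = A) = (B = A)"
      by (metis bij_is_inj inj_image_eq_iff)
    then show ?thesis unfolding Aut_def by (metis (mono_tags, lifting) insert_iff singletonD)
  qed
  have P2: "\<forall>\<phi> x (v :: nat \<Rightarrow> nat) (t :: nat) (s :: nat \<Rightarrow> nat).
           wf \<phi> \<and> fv \<phi> \<subseteq> insert x (v ` {0..t}) \<and> x \<notin> v ` {0..t}
           \<and> (\<forall>i\<le>t. s (v i) \<le> t)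
           \<longrightarrow> {a. sat {A} \<phi> (s(x := a))} \<subseteq> {0..t}
             \<or> - {0..t} \<subseteq> {a. sat {A} \<phi> (s(x := a))}"
  proof (intro allI impI)
    fix \<phi> :: form and x :: nat and v :: "nat \<Rightarrow> nat" and t :: nat and s :: "nat \<Rightarrow> nat"
    assume h: "wf \<phi> \<and> fv \<phi> \<subseteq> insert x (v ` {0..t}) \<and> x \<notin> v ` {0..t}
           \<and> (\<forall>i\<le>t. s (v i) \<le> t)"
    have hwf: "wf \<phi>" and hfv: "fv \<phi> \<subseteq> insert x (v ` {0..t})"
      and hs: "\<forall>i\<le>t. s (v i) \<le> t" using h by blast+
    have sub: "s ` (fv \<phi> - {x}) \<subseteq> {0..t}"
    proof
      fix y assume "y \<in> s ` (fv \<phi> - {x})"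
      then obtain i where "i \<in> fv \<phi>" "i \<noteq> x" "y = s i" by auto
      then have "i \<in> v ` {0..t}" using hfv by blast
      then obtain j where "j \<le> t" "i = v j" by auto
      then have "s i \<le> t" using hs by simp
      then show "y \<in> {0..t}" using \<open>y = s i\<close> by simp
    qed
    have inv: "\<And>a b. a \<notin> {0..t} \<Longrightarrow> b \<notin> {0..t} \<Longrightarrow>
        sat {A} \<phi> (s(x := a)) = sat {A} \<phi> (s(x := b))"
    proof -
      fix a b :: nat assume "a \<notin> {0..t}" "b \<notin> {0..t}"
      then have "a \<notin> s ` (fv \<phi> - {x})" "b \<notin> s ` (fv \<phi> - {x})" using sub by auto
      then have "sat {} \<phi> (s(x := a)) = sat {} \<phi> (s(x := b))" by (rule sat_swap)
      then show "sat {A} \<phi> (s(x := a)) = sat {A} \<phi> (s(x := b))"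
        using sat_A_empty[OF assms hwf] by simp
    qed
    show "{a. sat {A} \<phi> (s(x := a))} \<subseteq> {0..t}
             \<or> - {0..t} \<subseteq> {a. sat {A} \<phi> (s(x := a))}"
    proof (cases "\<exists>a. a \<notin> {0..t} \<and> sat {A} \<phi> (s(x := a))")
      case True
      then obtain a where a: "a \<notin> {0..t}" "sat {A} \<phi> (s(x := a))" by blast
      have "- {0..t} \<subseteq> {a. sat {A} \<phi> (s(x := a))}"
      proof
        fix b assume "b \<in> - {0..t}"
        then have "b \<notin> {0..t}" by simp
        then show "b \<in> {a. sat {A} \<phi> (s(x := a))}" using inv[OF a(1) \<open>b \<notin> {0..t}\<close>] a(2) by simp
      qed
      then show ?thesis ..
    next
      case False
      have "{a. sat {A} \<phi> (s(x := a))} \<subseteq> {0..t}"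
      proof
        fix b assume "b \<in> {a. sat {A} \<phi> (s(x := a))}"
        then show "b \<in> {0..t}" using False by blast
      qed
      then show ?thesis ..
    qed
  qed
  have P3: "\<forall>a\<in>A. {g a | g. g \<in> Aut {A}} = A"
  proof
    fix a assume aA: "a \<in> A"
    show "{g a | g. g \<in> Aut {A}} = A"
    proof
      show "{g a | g. g \<in> Aut {A}} \<subseteq> A" using P1 aA by auto
      show "A \<subseteq> {g a | g. g \<in> Aut {A}}"
      proof
        fix b assume bA: "b \<in> A"
        have inv: "\<And>z. swp a b (swp a b z) = z" by (simp add: swp_def)
        have bj: "bij (swp a b)" by (rule swp_surj)
        have "swp a b ` A \<subseteq> A" using aA bA by (auto simp: swp_def)
        moreover have "A \<subseteq> swp a b ` A"
        proof
          fix z assume "z \<in> A"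
          moreover have "swp a b z \<in> A" using \<open>z \<in> A\<close> aA bA by (auto simp: swp_def)
          ultimately show "z \<in> swp a b ` A" using inv by (metis image_eqI)
        qed
        ultimately have "swp a b \<in> Aut {A}" using P1 bj by auto
        moreover have "swp a b a = b" by (simp add: swp_def)
        ultimately show "b \<in> {g a | g. g \<in> Aut {A}}" unfolding mem_Collect_eq by metis
      qed
    qed
  qed
  have P4: "\<not> definable1 {A} A"
  proof
    assume "definable1 {A} A"
    then obtain \<phi> x where d: "wf \<phi>" "fv \<phi> \<subseteq> {x}"
      "\<forall>s a. a \<in> A \<longleftrightarrow> sat {A} \<phi> (s(x := a))" unfolding definable1_def by blast
    let ?v = "\<lambda>_::nat. Suc x"
    let ?s = "\<lambda>_::nat. 0::nat"
    have "{a. sat {A} \<phi> (?s(x := a))} \<subseteq> {0..0}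
             \<or> - {0..0} \<subseteq> {a. sat {A} \<phi> (?s(x := a))}"
    proof (rule P2[rule_format, of \<phi> x ?v 0 ?s], intro conjI)
      show "fv \<phi> \<subseteq> insert x (?v ` {0..0})" using d(2) by blast
    qed (use d(1) in auto)
    moreover have "{a. sat {A} \<phi> (?s(x := a))} = A" using d by auto
    ultimately have "A \<subseteq> {0} \<or> - {0} \<subseteq> A" by simp
    then have "A \<subseteq> {0} \<or> - A \<subseteq> {0}" by blast
    then show False using assms finite_subset by blast
  qed
  show ?thesis by (rule conjI[OF P1 conjI[OF P2 conjI[OF P3 P4]]])
qed

end
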